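(* Consider the following networked control setting. Let $f_p:\mathbb{R}^{n_p}\times\mathbb{R}^{m_p}\to\mathbb{R}^{n_p}$ with $f_p(0,0)=0$, a closed set $\mathbb{X}_p\subseteq\mathbb{R}^{n_p}$ and a compact set $\mathbb{U}_p\subseteq\mathbb{R}^{m_p}$, both containing the origin, $Q,R>0$, and integers $g\in\mathbb{I}_{\geq1}$, $c\in\mathbb{I}_{\geq g}$, $b\in\mathbb{I}_{\geq c}$ with $q:=\lceil c/g\rceil\geq2$. The overall state is $x=(x_p,u_s,\beta)\in\mathbb{X}:=\mathbb{X}_p\times\mathbb{U}_p\times\mathbb{I}_{[0,b]}$, the input $u=(u_c,\gamma,\delta)\in\mathbb{U}:=\mathbb{U}_p\times\{(\gamma,\delta)\in\{0,1\}^2:\gamma+\delta\leq1\}$, and the dynamics are $x(k+1)=f(x(k),u(k))$ with $$f(x,u)=\big(f_p(x_p,(\gamma+\delta)u_c+(1-\gamma-\delta)u_s),\ (\gamma+\delta)u_c+(1-\gamma-\delta)u_s,\ \min\{\beta+(1-\delta)g-\gamma c,b\}\big).$$ For $\psi>0$ the stage cost is $\ell(x,u)=\|x_p\|_Q^2+(\gamma+\delta)\|u_c\|_R^2+(1-\gamma-\delta)\|u_s\|_R^2+\psi(b^2-\beta^2)$. For $u_c\in\mathbb{U}_p$ define $f_{p,0}(x_p,u_c):=x_p$, $f_{p,i}(x_p,u_c):=f_p(f_{p,i-1}(x_p,u_c),u_c)$. Assume: (A1) there exist a closed set $\mathbb{X}_{f,p}\subseteq\mathbb{X}_p$ containing the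 origin and $k_p:\mathbb{X}_{f,p}\to\mathbb{U}_p$ such that for all $x_p\in\mathbb{X}_{f,p}$: $f_{p,i}(x_p,k_p(x_p))\in\mathbb{X}_p$ for all $i\in\mathbb{I}_{[1,q-1]}$ and $f_{p,q}(x_p,k_p(x_p))\in\mathbb{X}_{f,p}$; moreover $(0,0)\in\operatorname{int}(\mathbb{X}_{f,p}\times\mathbb{U}_p)$; (A2) there is a continuous positive definite $V_{f,p}:\mathbb{X}_{f,p}\to\mathbb{R}$ with, for all $x_p\in\mathbb{X}_{f,p}$, $V_{f,p}(f_{p,q}(x_p,k_p(x_p)))-V_{f,p}(x_p)\leq -q\|k_p(x_p)\|_R^2-\sum_{i=0}^{q-1}\|f_{p,i}(x_p,k_p(x_p))\|_Q^2$; (A4) $\sigma>0$ satisfies $\sigma\geq\psi\big(qb^2-\tfrac16g^2(q-1)(q-2)(2q-3)\big)$. Let $V_f(x):=V_{f,p}(x_p)+\sigma(b^2-\beta^2)$ and $\mathbb{X}_f:=\mathbb{X}_{f,p}\times\mathbb{U}_p\times\mathbb{I}_{[0,b]}$. Fix $r\in\mathbb{I}_{\geq1}$, $M:=rq$, and $N:=JM$ with $J\in\mathbb{I}_{\geq1}$. The closed loop is generated by the rollout scheme: at each $k=jM$, $j\in\mathbb{I}_{\geq0}$, solve $\mathbb{P}(x(jM))$: minimize $\sum_{i=0}^{N-1}\ell(x(i|jM),u(i|jM))+V_f(x(N|jM))$ over $u(0|jM),\dots,u(N-1|jM)$ subject to $x(i+1|jM)=f(x(i|jM),u(i|jM))$,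 $x(i|jM)\in\mathbb{X}$, $u(i|jM)\in\mathbb{U}$ for $i\in\mathbb{I}_{[0,N-1]}$, $x(0|jM)=x(jM)$, $x(N|jM)\in\mathbb{X}_f$, with optimizer $u^*(\cdot|jM)$, and apply $u(jM+i)=u^*(i|jM)$ for $i\in\mathbb{I}_{[0,M-1]}$. Then, if $\mathbb{P}(x(0))$ is feasible, $\mathbb{P}(x(jM))$ is feasible for all $j\in\mathbb{I}_{\geq0}$ and the point $(0,0,b)$ is asymptotically stable for the closed loop.
   Context: $\mathbb{I}$ denotes the integers, $\mathbb{I}_{[a,b]}:=\mathbb{I}\cap[a,b]$, $\mathbb{I}_{\geq a}:=\mathbb{I}\cap[a,\infty)$, $\|v\|_A^2:=v^TAv$, $A>0$ means positive definite, and int denotes the interior. Here $x_p$ is the plant state, $u_s$ the last applied (held) input, $\beta$ the token level of a token bucket (size $b$, rate $g$, cost $c$); $\gamma=1$ is a transmission over the token-bucket-constrained network and $\delta=1$ a transmission over a direct link which consumes no tokens and during which no tokens are added. "Feasible" means the constraint set is nonempty. *)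

theory Defs
  imports "HOL-Analysis.Analysis"
begin

definition qf :: "real^'k^'k \<Rightarrow> real^'k \<Rightarrow> real" where
  "qf A v = v \<bullet> (A *v v)"

definition pos_def_mat :: "real^'k^'k \<Rightarrow> bool" where
  "pos_def_mat A \<longleftrightarrow> transpose A = A \<and> (\<forall>v. v \<noteq> 0 \<longrightarrow> qf A v > 0)"

definition fpi :: "('n \<Rightarrow> 'm \<Rightarrow> 'n) \<Rightarrow> nat \<Rightarrow> 'n \<Rightarrow> 'm \<Rightarrow> 'n" where
  "fpi fp i xp uc = ((\<lambda>z. fp z uc) ^^ i) xp"

text \<open>States x = (x_p, u_s, beta), inputs u = (u_c, gamma, delta).\<close>
type_synonym ('n,'m) nstate = "(real^'n::finite) \<times> (real^'m::finite) \<times> int"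
type_synonym 'm ninput = "(real^'m::finite) \<times> int \<times> int"

definition applied_input :: "('n,'m) nstate \<Rightarrow> 'm ninput \<Rightarrow> real^'m" where
  "applied_input x u = (case x of (xp, us, \<beta>) \<Rightarrow> case u of (uc, \<gamma>, \<delta>) \<Rightarrow>
      of_int (\<gamma> + \<delta>) *\<^sub>R uc + of_int (1 - \<gamma> - \<delta>) *\<^sub>R us)"

definition sys_f :: "(real^'n \<Rightarrow> real^'m \<Rightarrow> real^'n) \<Rightarrow> int \<Rightarrow> int \<Rightarrow> int
      \<Rightarrow> ('n,'m) nstate \<Rightarrow> 'm ninput \<Rightarrow> ('n,'m) nstate" where
  "sys_f fp g c b x u = (case x of (xp, us, \<beta>) \<Rightarrow> case u of (uc, \<gamma>, \<delta>) \<Rightarrow>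
      (fp xp (applied_input x u), applied_input x u, min (\<beta> + (1 - \<delta>) * g - \<gamma> * c) b))"

definition stage_cost :: "real^'n^'n \<Rightarrow> real^'m^'m \<Rightarrow> real \<Rightarrow> int
      \<Rightarrow> ('n,'m) nstate \<Rightarrow> 'm ninput \<Rightarrow> real" where
  "stage_cost Q R \<psi> b x u = (case x of (xp, us, \<beta>) \<Rightarrow> case u of (uc, \<gamma>, \<delta>) \<Rightarrow>
      qf Q xp + of_int (\<gamma> + \<delta>) * qf R uc + of_int (1 - \<gamma> - \<delta>) * qf R us
      + \<psi> * (of_int b ^ 2 - of_int \<beta> ^ 2))"

definition state_set :: "(real^'n) set \<Rightarrow> (real^'m) set \<Rightarrow> int \<Rightarrow> ('n,'m) nstate set" where
  "state_set Xp Up b = Xp \<times> Up \<times> {0..b}"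

definition input_set :: "(real^'m) set \<Rightarrow> 'm ninput set" where
  "input_set Up = Up \<times> {(\<gamma>, \<delta>). \<gamma> \<in> {0, 1} \<and> \<delta> \<in> {0, 1} \<and> \<gamma> + \<delta> \<le> 1}"

definition term_cost :: "(real^'n \<Rightarrow> real) \<Rightarrow> real \<Rightarrow> int \<Rightarrow> ('n,'m) nstate \<Rightarrow> real" where
  "term_cost Vfp \<sigma> b x = (case x of (xp, us, \<beta>) \<Rightarrow> Vfp xp + \<sigma> * (of_int b ^ 2 - of_int \<beta> ^ 2))"

fun traj :: "('s \<Rightarrow> 'i \<Rightarrow> 's) \<Rightarrow> 's \<Rightarrow> (nat \<Rightarrow> 'i) \<Rightarrow> nat \<Rightarrow> 's" where
  "traj F x0 us 0 = x0"
| "traj F x0 us (Suc i) = F (traj F x0 us i) (us i)"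

definition ocp_admissible :: "('s \<Rightarrow> 'i \<Rightarrow> 's) \<Rightarrow> 's set \<Rightarrow> 'i set \<Rightarrow> 's set \<Rightarrow> nat
      \<Rightarrow> 's \<Rightarrow> (nat \<Rightarrow> 'i) \<Rightarrow> bool" where
  "ocp_admissible F X U Xf N x0 us \<longleftrightarrow>
     (\<forall>i<N. traj F x0 us i \<in> X \<and> us i \<in> U) \<and> traj F x0 us N \<in> Xf"

definition ocp_feasible :: "('s \<Rightarrow> 'i \<Rightarrow> 's) \<Rightarrow> 's set \<Rightarrow> 'i set \<Rightarrow> 's set \<Rightarrow> nat \<Rightarrow> 's \<Rightarrow> bool" where
  "ocp_feasible F X U Xf N x0 \<longleftrightarrow> (\<exists>us. ocp_admissible F X U Xf N x0 us)"

definition ocp_cost :: "('s \<Rightarrow> 'i \<Rightarrow> 's) \<Rightarrow> ('s \<Rightarrow> 'i \<Rightarrow> real) \<Rightarrow> ('s \<Rightarrow> real) \<Rightarrow> nat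
      \<Rightarrow> 's \<Rightarrow> (nat \<Rightarrow> 'i) \<Rightarrow> real" where
  "ocp_cost F L Vf N x0 us = (\<Sum>i<N. L (traj F x0 us i) (us i)) + Vf (traj F x0 us N)"

definition ocp_optimal :: "('s \<Rightarrow> 'i \<Rightarrow> 's) \<Rightarrow> 's set \<Rightarrow> 'i set \<Rightarrow> 's set
      \<Rightarrow> ('s \<Rightarrow> 'i \<Rightarrow> real) \<Rightarrow> ('s \<Rightarrow> real) \<Rightarrow> nat \<Rightarrow> 's \<Rightarrow> (nat \<Rightarrow> 'i) \<Rightarrow> bool" where
  "ocp_optimal F X U Xf L Vf N x0 us \<longleftrightarrow> ocp_admissible F X U Xf N x0 us \<and>
     (\<forall>vs. ocp_admissible F X U Xf N x0 vs \<longrightarrow> ocp_cost F L Vf N x0 us \<le> ocp_cost F L Vf N x0 vs)"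

definition rollout_closed_loop :: "('s \<Rightarrow> 'i \<Rightarrow> 's) \<Rightarrow> 's set \<Rightarrow> 'i set \<Rightarrow> 's set
      \<Rightarrow> ('s \<Rightarrow> 'i \<Rightarrow> real) \<Rightarrow> ('s \<Rightarrow> real) \<Rightarrow> nat \<Rightarrow> nat \<Rightarrow> (nat \<Rightarrow> 's) \<Rightarrow> (nat \<Rightarrow> 'i) \<Rightarrow> bool" where
  "rollout_closed_loop F X U Xf L Vf N M xs us \<longleftrightarrow>
     (\<forall>k. xs (Suc k) = F (xs k) (us k)) \<and>
     (\<forall>j. ocp_feasible F X U Xf N (xs (j * M)) \<longrightarrow>
          (\<exists>vs. ocp_optimal F X U Xf L Vf N (xs (j * M)) vs \<and> (\<forall>i<M. us (j * M + i) = vs i)))"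

text \<open>Asymptotic stability of an equilibrium for a (set-valued) closed loop, with region
  of attraction D; d measures the distance of a state to the equilibrium.\<close>
definition asympt_stable_cl :: "((nat \<Rightarrow> 's) \<Rightarrow> (nat \<Rightarrow> 'i) \<Rightarrow> bool) \<Rightarrow> 's set \<Rightarrow> ('s \<Rightarrow> real) \<Rightarrow> bool" where
  "asympt_stable_cl CL D d \<longleftrightarrow>
     (\<forall>\<epsilon>>0. \<exists>\<delta>>0. \<forall>xs us. CL xs us \<and> xs 0 \<in> D \<and> d (xs 0) < \<delta> \<longrightarrow> (\<forall>k. d (xs k) < \<epsilon>)) \<and>
     (\<forall>xs us. CL xs us \<and> xs 0 \<in> D \<longrightarrow> (\<lambda>k. d (xs k)) \<longlonglongrightarrow> 0)"

definition dist_eq :: "int \<Rightarrow> ('n::finite,'m::finite) nstate \<Rightarrow> real" where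
  "dist_eq b x = (case x of (xp, us, \<beta>) \<Rightarrow> norm xp + norm us + \<bar>of_int (\<beta> - b)\<bar>)"

end

theory Submission
  imports Defs
begin


lemma traj_cong: "(\<And>i. i < n \<Longrightarrow> us i = vs i) \<Longrightarrow> traj F x us n = traj F x vs n"
  by (induction n) auto

lemma traj_add: "traj F x us (a + b) = traj F (traj F x us a) (\<lambda>i. us (a + i)) b"
  by (induction b) auto

definition cat :: "nat \<Rightarrow> (nat \<Rightarrow> 'i) \<Rightarrow> (nat \<Rightarrow> 'i) \<Rightarrow> nat \<Rightarrow> 'i" where
  "cat a w1 w2 = (\<lambda>i. if i < a then w1 i else w2 (i - a))"

lemma cat_lt: "i < a \<Longrightarrow> cat a w1 w2 i = w1 i"
  by (simp add: cat_def)

lemma cat_ge: "cat a w1 w2 (a + j) = w2 j"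
  by (simp add: cat_def)

lemma traj_cat_le: "i \<le> a \<Longrightarrow> traj F x (cat a w1 w2) i = traj F x w1 i"
  by (rule traj_cong) (auto simp: cat_def)

lemma traj_cat_ge: "traj F x (cat a w1 w2) (a + j) = traj F (traj F x w1 a) w2 j"
proof -
  have "traj F x (cat a w1 w2) (a + j) = traj F (traj F x (cat a w1 w2) a) (\<lambda>i. cat a w1 w2 (a + i)) j"
    by (rule traj_add)
  also have "(\<lambda>i. cat a w1 w2 (a + i)) = w2" by (auto simp: cat_def)
  also have "traj F x (cat a w1 w2) a = traj F x w1 a" by (rule traj_cat_le) simp
  finally show ?thesis .
qed

lemma sum_split: "(\<Sum>i<(a::nat)+b. f i) = (\<Sum>i<a. f i) + (\<Sum>j<b. f (a + j))"
  by (induction b) (auto simp: add_ac)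

lemma cat_adm:
  assumes "ocp_admissible F X U Y a x w1" "ocp_admissible F X U Z b (traj F x w1 a) w2"
  shows "ocp_admissible F X U Z (a + b) x (cat a w1 w2)"
  unfolding ocp_admissible_def
proof (rule conjI)
  show "\<forall>i<a + b. traj F x (cat a w1 w2) i \<in> X \<and> cat a w1 w2 i \<in> U"
  proof (intro allI impI)
  fix i assume i: "i < a + b"
  show "traj F x (cat a w1 w2) i \<in> X \<and> cat a w1 w2 i \<in> U"
  proof (cases "i < a")
    case True
    then show ?thesis using assms(1) traj_cat_le[of i a F x w1 w2]
      by (auto simp: ocp_admissible_def cat_def)
  next
    case False
    then obtain j where j: "i = a + j" "j < b" using i by (metis add_less_imp_less_left le_Suc_ex not_less)
    then show ?thesis using assms(2) traj_cat_ge[of F x a w1 w2 j]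
      by (auto simp: ocp_admissible_def cat_def)
  qed
  qed
next
  show "traj F x (cat a w1 w2) (a + b) \<in> Z"
    using assms(2) traj_cat_ge[of F x a w1 w2 b] by (auto simp: ocp_admissible_def)
qed

lemma cat_cost:
  "ocp_cost F L Vf (a + b) x (cat a w1 w2) =
     (\<Sum>i<a. L (traj F x w1 i) (w1 i)) + ocp_cost F L Vf b (traj F x w1 a) w2"
proof -
  have "(\<Sum>i<a+b. L (traj F x (cat a w1 w2) i) (cat a w1 w2 i)) =
      (\<Sum>i<a. L (traj F x (cat a w1 w2) i) (cat a w1 w2 i)) +
      (\<Sum>j<b. L (traj F x (cat a w1 w2) (a+j)) (cat a w1 w2 (a+j)))"
    by (rule sum_split)
  also have "(\<Sum>i<a. L (traj F x (cat a w1 w2) i) (cat a w1 w2 i)) = (\<Sum>i<a. L (traj F x w1 i) (w1 i))"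
    by (rule sum.cong) (auto simp: traj_cat_le cat_lt)
  also have "(\<Sum>j<b. L (traj F x (cat a w1 w2) (a+j)) (cat a w1 w2 (a+j))) =
      (\<Sum>j<b. L (traj F (traj F x w1 a) w2 j) (w2 j))"
    by (rule sum.cong) (auto simp: traj_cat_ge cat_ge)
  finally show ?thesis by (simp add: ocp_cost_def traj_cat_ge)
qed

lemma shift_adm:
  assumes "ocp_admissible F X U Xf N x vs" "M \<le> N"
  shows "ocp_admissible F X U Xf (N - M) (traj F x vs M) (\<lambda>i. vs (M + i))"
  unfolding ocp_admissible_def
proof (intro conjI allI impI)
  have a: "\<forall>i<N. traj F x vs i \<in> X \<and> vs i \<in> U" "traj F x vs N \<in> Xf"
    using assms(1) by (auto simp: ocp_admissible_def)
  fix i assume "i < N - M"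
  hence i: "M + i < N" by simp
  show "traj F (traj F x vs M) (\<lambda>i. vs (M + i)) i \<in> X"
    using a(1) i traj_add[of F x vs M i, symmetric] by simp
  show "vs (M + i) \<in> U" using a(1) i by simp
next
  have a: "traj F x vs N \<in> Xf"
    using assms(1) by (auto simp: ocp_admissible_def)
  have "traj F (traj F x vs M) (\<lambda>i. vs (M + i)) (N - M) = traj F x vs (M + (N - M))"
    by (rule traj_add[symmetric])
  also have "\<dots> = traj F x vs N" using assms(2) by simp
  finally show "traj F (traj F x vs M) (\<lambda>i. vs (M + i)) (N - M) \<in> Xf" using a by simp
qed

lemma shift_cost:
  assumes "M \<le> N"
  shows "ocp_cost F L Vf N x vs = (\<Sum>i<M. L (traj F x vs i) (vs i))
     + ocp_cost F L Vf (N - M) (traj F x vs M) (\<lambda>i. vs (M + i))"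
proof -
  from assms have N: "N = M + (N - M)" by simp
  have "ocp_cost F L Vf N x vs = ocp_cost F L Vf (M + (N - M)) x vs" using N by simp
  also have "\<dots> = (\<Sum>i<M. L (traj F x vs i) (vs i)) + (\<Sum>j<N-M. L (traj F x vs (M+j)) (vs (M+j)))
       + Vf (traj F x vs (M + (N - M)))"
    unfolding ocp_cost_def sum_split by simp
  also have "\<dots> = (\<Sum>i<M. L (traj F x vs i) (vs i))
     + ocp_cost F L Vf (N - M) (traj F x vs M) (\<lambda>i. vs (M + i))"
    unfolding ocp_cost_def traj_add[symmetric] by simp
  finally show ?thesis .
qed

lemma term_blocks:
  assumes "\<forall>x\<in>Xf. \<exists>ws. ocp_admissible F X U Xf q x ws \<and> ocp_cost F L Vf q x ws \<le> Vf x"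
  shows "x \<in> Xf \<Longrightarrow> \<exists>ws. ocp_admissible F X U Xf (m * q) x ws \<and> ocp_cost F L Vf (m * q) x ws \<le> Vf x"
proof (induction m arbitrary: x)
  case 0
  then show ?case by (auto simp: ocp_admissible_def ocp_cost_def)
next
  case (Suc m)
  from assms Suc.prems obtain w1 where w1: "ocp_admissible F X U Xf q x w1" "ocp_cost F L Vf q x w1 \<le> Vf x"
    by blast
  have y: "traj F x w1 q \<in> Xf" using w1(1) by (simp add: ocp_admissible_def)
  from Suc.IH[OF y] obtain w2 where w2: "ocp_admissible F X U Xf (m * q) (traj F x w1 q) w2"
    "ocp_cost F L Vf (m * q) (traj F x w1 q) w2 \<le> Vf (traj F x w1 q)" by blast
  have "ocp_admissible F X U Xf (q + m * q) x (cat q w1 w2)" by (rule cat_adm[OF w1(1) w2(1)])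
  moreover have "ocp_cost F L Vf (q + m * q) x (cat q w1 w2) \<le> Vf x"
    using w1(2) w2(2) unfolding cat_cost by (simp add: ocp_cost_def)
  ultimately show ?case by (auto simp: add.commute)
qed

lemma decrease:
  assumes TM: "\<forall>x\<in>Xf. \<exists>ws. ocp_admissible F X U Xf M x ws \<and> ocp_cost F L Vf M x ws \<le> Vf x"
    and MN: "M \<le> N"
    and opt: "ocp_optimal F X U Xf L Vf N x vs"
  shows "ocp_feasible F X U Xf N (traj F x vs M)"
    and "\<And>ws. ocp_optimal F X U Xf L Vf N (traj F x vs M) ws \<Longrightarrow>
       ocp_cost F L Vf N (traj F x vs M) ws + (\<Sum>i<M. L (traj F x vs i) (vs i)) \<le> ocp_cost F L Vf N x vs"
proof -
  let ?y = "traj F x vs M"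
  let ?s = "\<lambda>i. vs (M + i)"
  have adm: "ocp_admissible F X U Xf N x vs" using opt by (simp add: ocp_optimal_def)
  have sadm: "ocp_admissible F X U Xf (N - M) ?y ?s" by (rule shift_adm[OF adm MN])
  have e: "traj F ?y ?s (N - M) \<in> Xf" using sadm by (simp add: ocp_admissible_def)
  from TM e obtain w where w: "ocp_admissible F X U Xf M (traj F ?y ?s (N - M)) w"
    "ocp_cost F L Vf M (traj F ?y ?s (N - M)) w \<le> Vf (traj F ?y ?s (N - M))" by blast
  have cadm: "ocp_admissible F X U Xf (N - M + M) ?y (cat (N - M) ?s w)" by (rule cat_adm[OF sadm w(1)])
  hence cadm': "ocp_admissible F X U Xf N ?y (cat (N - M) ?s w)" using MN by simp
  thus "ocp_feasible F X U Xf N ?y" by (auto simp: ocp_feasible_def)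
  have cc: "ocp_cost F L Vf N ?y (cat (N - M) ?s w) \<le> ocp_cost F L Vf (N - M) ?y ?s"
    using cat_cost[of F L Vf "N - M" M ?y ?s w] w(2) MN by (simp add: ocp_cost_def)
  fix ws assume "ocp_optimal F X U Xf L Vf N ?y ws"
  hence "ocp_cost F L Vf N ?y ws \<le> ocp_cost F L Vf N ?y (cat (N - M) ?s w)"
    using cadm' by (simp add: ocp_optimal_def)
  thus "ocp_cost F L Vf N ?y ws + (\<Sum>i<M. L (traj F x vs i) (vs i)) \<le> ocp_cost F L Vf N x vs"
    using cc shift_cost[OF MN, of F L Vf x vs] by simp
qed



lemma qf_scale: "qf A (c *\<^sub>R v) = c ^ 2 * qf A v"
  by (simp add: qf_def matrix_vector_mult_scaleR power2_eq_square)

lemma qf_lower: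
  fixes A :: "real^'k^'k"
  assumes "pos_def_mat A"
  shows "\<exists>l>0. \<forall>v. l * norm v ^ 2 \<le> qf A v"
proof -
  have pd: "\<And>v. v \<noteq> 0 \<Longrightarrow> qf A v > 0" using assms by (simp add: pos_def_mat_def)
  have cont: "continuous_on (sphere 0 1) (qf A)"
    unfolding qf_def by (intro continuous_intros linear_continuous_on matrix_vector_mul_bounded_linear)
  have ne: "sphere (0::real^'k) 1 \<noteq> {}"
  proof -
    have "vec 1 \<noteq> (0::real^'k)" by (simp add: vec_eq_iff)
    then obtain v :: "real^'k" where "v \<noteq> 0" by blast
    hence "v /\<^sub>R norm v \<in> sphere 0 1" by simp
    thus ?thesis by blast
  qed
  obtain v0 where v0: "v0 \<in> sphere 0 1" "\<forall>y\<in>sphere 0 1. qf A v0 \<le> qf A y"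
    using continuous_attains_inf[OF compact_sphere ne cont] by blast
  have "v0 \<noteq> 0" using v0(1) by auto
  hence l: "qf A v0 > 0" using pd by blast
  show ?thesis
  proof (intro exI[of _ "qf A v0"] conjI allI l)
    fix v :: "real^'k"
    show "qf A v0 * norm v ^ 2 \<le> qf A v"
    proof (cases "v = 0")
      case True then show ?thesis by (simp add: qf_def)
    next
      case False
      hence u: "v /\<^sub>R norm v \<in> sphere 0 1" by simp
      have "qf A v = norm v ^ 2 * qf A (v /\<^sub>R norm v)"
        using False by (simp add: qf_scale power2_eq_square field_simps)
      moreover have "qf A v0 \<le> qf A (v /\<^sub>R norm v)" using v0(2) u by blast
      hence "norm v ^ 2 * qf A v0 \<le> norm v ^ 2 * qf A (v /\<^sub>R norm v)"
        by (rule mult_left_mono) simp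
      ultimately show ?thesis by (simp add: mult.commute)
    qed
  qed
qed

lemma sumsq: "(\<Sum>i<Suc n. (real (i - 1))^2) = real n * (real n - 1) * (2 * real n - 1) / 6"
  by (induction n) (auto simp: field_simps power2_eq_square)

lemma token:
  fixes \<beta> b g :: int and q :: nat and \<psi> \<sigma> :: real
  assumes "0 \<le> \<beta>" "\<beta> \<le> b" "g \<ge> 1" "q \<ge> 2" "int (q - 1) * g \<le> b" "\<psi> > 0" "\<sigma> > 0"
    "\<sigma> \<ge> \<psi> * (real q * of_int b ^ 2 - of_int g ^ 2 * (real q - 1) * (real q - 2) * (2 * real q - 3) / 6)"
  shows "\<psi> * (\<Sum>i<q. of_int b ^ 2 - of_int (min (\<beta> + int (i - 1) * g) b) ^ 2)
      \<le> \<sigma> * (of_int (min (\<beta> + int (q - 1) * g) b) ^ 2 - of_int \<beta> ^ 2)"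
proof (cases "\<beta> = b")
  case True
  have "\<And>i. min (b + int (i - 1) * g) b = b"
  proof -
    fix i have "0 \<le> int (i - 1) * g" using assms(3) by simp
    thus "min (b + int (i - 1) * g) b = b" by simp
  qed
  then show ?thesis using True by simp
next
  case False
  hence lt: "\<beta> + 1 \<le> b" using assms(2) by simp
  have qq: "int (q - 1) \<ge> 1" using assms(4) by simp
  have q1: "int (q - 1) * g \<ge> 1 * 1" by (rule mult_mono) (use qq assms(3) in auto)
  define m where "m = min (\<beta> + int (q - 1) * g) b"
  have "\<beta> + 1 \<le> \<beta> + int (q - 1) * g" using q1 by linarith
  hence m1: "\<beta> + 1 \<le> m" unfolding m_def using lt by (rule min.boundedI)
  have "(of_int \<beta> + 1 :: real)^2 \<le> (of_int m)^2"
    by (rule power_mono) (use m1 assms(1) in \<open>simp_all add: of_int_add[symmetric] del: of_int_add\<close>)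
  moreover have "(of_int \<beta> + 1 :: real)^2 = of_int \<beta> ^2 + 2 * of_int \<beta> + 1"
    by (simp add: power2_eq_square algebra_simps)
  ultimately have h1: "(of_int m)^2 - (of_int \<beta>)^2 \<ge> (1::real)" using assms(1) by simp
  have h2: "\<And>i. i < q \<Longrightarrow> of_int b ^ 2 - of_int (min (\<beta> + int (i - 1) * g) b) ^ 2
      \<le> of_int b ^ 2 - (real (i - 1) * of_int g) ^ 2"
  proof -
    fix i assume "i < q"
    hence "int (i - 1) \<le> int (q - 1)" by simp
    hence "int (i - 1) * g \<le> int (q - 1) * g" using assms(3) by (intro mult_right_mono) auto
    hence le: "int (i - 1) * g \<le> min (\<beta> + int (i - 1) * g) b" using assms(1,5) by simp
    have "(of_int (int (i - 1) * g) :: real) ^ 2 \<le> (of_int (min (\<beta> + int (i - 1) * g) b)) ^ 2"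
      by (rule power_mono) (use le assms(3) in \<open>simp_all only: of_int_le_iff, auto\<close>)
    thus "of_int b ^ 2 - of_int (min (\<beta> + int (i - 1) * g) b) ^ 2
      \<le> of_int b ^ 2 - (real (i - 1) * of_int g) ^ 2" by simp
  qed
  have "(\<Sum>i<q. of_int b ^ 2 - of_int (min (\<beta> + int (i - 1) * g) b) ^ 2)
     \<le> (\<Sum>i<q. of_int b ^ 2 - (real (i - 1) * of_int g) ^ 2)"
    by (rule sum_mono) (use h2 in auto)
  also have "\<dots> = real q * of_int b ^ 2 - of_int g ^ 2 * (\<Sum>i<q. (real (i - 1))^2)"
    by (simp add: sum_subtractf sum_distrib_left power_mult_distrib mult.commute)
  also have "(\<Sum>i<q. (real (i - 1))^2) = (real q - 1) * (real q - 2) * (2 * real q - 3) / 6"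
  proof -
    have qs: "q = Suc (q - 1)" using assms(4) by simp
    have "(\<Sum>i<q. (real (i - 1))^2) = (\<Sum>i<Suc (q - 1). (real (i - 1))^2)" using qs by simp
    also have "\<dots> = real (q - 1) * (real (q - 1) - 1) * (2 * real (q - 1) - 1) / 6" by (rule sumsq)
    also have "real (q - 1) = real q - 1" using assms(4) by simp
    finally show ?thesis by (simp add: algebra_simps)
  qed
  finally have h3: "(\<Sum>i<q. of_int b ^ 2 - of_int (min (\<beta> + int (i - 1) * g) b) ^ 2)
     \<le> real q * of_int b ^ 2 - of_int g ^ 2 * ((real q - 1) * (real q - 2) * (2 * real q - 3) / 6)" .
  have "\<psi> * (\<Sum>i<q. of_int b ^ 2 - of_int (min (\<beta> + int (i - 1) * g) b) ^ 2)
     \<le> \<psi> * (real q * of_int b ^ 2 - of_int g ^ 2 * ((real q - 1) * (real q - 2) * (2 * real q - 3) / 6))"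
    by (rule mult_left_mono[OF h3]) (use assms(6) in simp)
  also have "\<dots> \<le> \<sigma>" using assms(8) by (simp add: algebra_simps)
  also have "\<sigma> = \<sigma> * 1" by simp
  also have "\<dots> \<le> \<sigma> * ((of_int m)^2 - (of_int \<beta>)^2)"
    by (rule mult_left_mono[OF h1]) (use assms(7) in simp)
  finally show ?thesis by (simp add: m_def)
qed



lemma block_traj:
  assumes "\<forall>k. xs (Suc k) = F (xs k) (us k)" "\<forall>i<M. us (p + i) = vs i" "i \<le> M"
  shows "xs (p + i) = traj F (xs p) vs i"
  using assms(3)
proof (induction i)
  case 0 then show ?case by simp
next
  case (Suc i)
  have "xs (p + Suc i) = F (xs (p + i)) (us (p + i))" using assms(1) by simp
  also have "\<dots> = F (traj F (xs p) vs i) (vs i)" using Suc assms(2) by simp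
  finally show ?case by simp
qed

lemma closed_loop_generic:
  assumes TM: "\<forall>x\<in>Xf. \<exists>ws. ocp_admissible F X U Xf M x ws \<and> ocp_cost F L Vf M x ws \<le> Vf x"
    and TN: "\<forall>x\<in>Xf. \<exists>ws. ocp_admissible F X U Xf N x ws \<and> ocp_cost F L Vf N x ws \<le> Vf x"
    and M1: "1 \<le> M" "M \<le> N"
    and Lnn: "\<forall>x\<in>X. \<forall>u\<in>U. 0 \<le> L x u"
    and Vnn: "\<forall>x\<in>Xf. 0 \<le> Vf x"
    and cl: "rollout_closed_loop F X U Xf L Vf N M xs us"
    and f0: "ocp_feasible F X U Xf N (xs 0)"
  shows "(\<forall>j. ocp_feasible F X U Xf N (xs (j * M))) \<and> (\<forall>k. xs k \<in> X \<and> us k \<in> U) \<and>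
    (\<exists>C. (\<forall>n. (\<Sum>k<n. L (xs k) (us k)) \<le> C) \<and> (xs 0 \<in> Xf \<longrightarrow> C \<le> Vf (xs 0)))"
proof -
  have dyn: "\<forall>k. xs (Suc k) = F (xs k) (us k)" using cl by (simp add: rollout_closed_loop_def)
  have opt: "\<And>j. ocp_feasible F X U Xf N (xs (j * M)) \<Longrightarrow>
      \<exists>vs. ocp_optimal F X U Xf L Vf N (xs (j * M)) vs \<and> (\<forall>i<M. us (j * M + i) = vs i)"
    using cl by (simp add: rollout_closed_loop_def)
  have nextM: "xs (Suc j * M) = traj F (xs (j * M)) vs M" if "\<forall>i<M. us (j * M + i) = vs i" for j vs
  proof -
    have "xs (j * M + M) = traj F (xs (j * M)) vs M" by (rule block_traj[OF dyn that]) simp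
    thus ?thesis by (simp add: add.commute)
  qed
  have feas: "ocp_feasible F X U Xf N (xs (j * M))" for j
  proof (induction j)
    case 0 then show ?case using f0 by simp
  next
    case (Suc j)
    from opt[OF Suc] obtain vs where vs: "ocp_optimal F X U Xf L Vf N (xs (j * M)) vs"
      "\<forall>i<M. us (j * M + i) = vs i" by blast
    show ?case using decrease(1)[OF TM M1(2) vs(1)] nextM[OF vs(2)] by simp
  qed
  define V where "V j = (SOME vs. ocp_optimal F X U Xf L Vf N (xs (j * M)) vs \<and> (\<forall>i<M. us (j * M + i) = vs i))" for j
  have V: "ocp_optimal F X U Xf L Vf N (xs (j * M)) (V j) \<and> (\<forall>i<M. us (j * M + i) = V j i)" for j
    unfolding V_def by (rule someI_ex[OF opt[OF feas]])
  define cost where "cost j = ocp_cost F L Vf N (xs (j * M)) (V j)" for j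
  have blk: "xs (j * M + i) = traj F (xs (j * M)) (V j) i" if "i \<le> M" for j i
    using block_traj[of xs F us M "j * M" "V j" i] dyn V that by blast
  have dec: "cost (Suc j) + (\<Sum>i<M. L (xs (j * M + i)) (us (j * M + i))) \<le> cost j" for j
  proof -
    have e: "traj F (xs (j * M)) (V j) M = xs (Suc j * M)" using nextM V by metis
    have "ocp_cost F L Vf N (traj F (xs (j * M)) (V j) M) (V (Suc j))
       + (\<Sum>i<M. L (traj F (xs (j * M)) (V j) i) (V j i)) \<le> ocp_cost F L Vf N (xs (j * M)) (V j)"
      by (rule decrease(2)[OF TM M1(2)]) (use V[of j] V[of "Suc j"] e in simp_all)
    moreover have "(\<Sum>i<M. L (traj F (xs (j * M)) (V j) i) (V j i)) = (\<Sum>i<M. L (xs (j * M + i)) (us (j * M + i)))"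
      by (rule sum.cong) (use blk V in auto)
    ultimately show ?thesis using e by (simp add: cost_def)
  qed
  have inXU: "xs k \<in> X \<and> us k \<in> U" for k
  proof -
    define j where "j = k div M"
    define i where "i = k mod M"
    have k: "k = j * M + i" by (simp add: j_def i_def)
    have i: "i < M" using M1 by (simp add: i_def)
    have adm: "ocp_admissible F X U Xf N (xs (j * M)) (V j)" using V by (simp add: ocp_optimal_def)
    have "traj F (xs (j * M)) (V j) i \<in> X \<and> V j i \<in> U"
      using adm i M1 by (simp add: ocp_admissible_def)
    thus ?thesis using k blk[of i j] V i by auto
  qed
  have cnn: "0 \<le> cost j" for j
  proof -
    have adm: "ocp_admissible F X U Xf N (xs (j * M)) (V j)" using V by (simp add: ocp_optimal_def)
    have "0 \<le> (\<Sum>i<N. L (traj F (xs (j * M)) (V j) i) (V j i))"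
      by (rule sum_nonneg) (use adm Lnn in \<open>auto simp: ocp_admissible_def\<close>)
    moreover have "0 \<le> Vf (traj F (xs (j * M)) (V j) N)" using adm Vnn by (simp add: ocp_admissible_def)
    ultimately show ?thesis by (simp add: cost_def ocp_cost_def)
  qed
  have Lk: "0 \<le> L (xs k) (us k)" for k using inXU Lnn by blast
  have ps: "(\<Sum>k<j * M. L (xs k) (us k)) + cost j \<le> cost 0" for j
  proof (induction j)
    case 0 then show ?case by simp
  next
    case (Suc j)
    have "(\<Sum>k<Suc j * M. L (xs k) (us k)) = (\<Sum>k<j * M. L (xs k) (us k)) + (\<Sum>i<M. L (xs (j * M + i)) (us (j * M + i)))"
      using sum_split[of "\<lambda>k. L (xs k) (us k)" "j * M" M] by (simp add: add.commute)
    then show ?case using Suc dec[of j] by simp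
  qed
  have bound: "(\<Sum>k<n. L (xs k) (us k)) \<le> cost 0" for n
  proof -
    have "(\<Sum>k<n. L (xs k) (us k)) \<le> (\<Sum>k<n * M. L (xs k) (us k))"
      by (rule sum_mono2) (use M1 Lk in auto)
    also have "\<dots> \<le> cost 0" using ps[of n] cnn[of n] by simp
    finally show ?thesis .
  qed
  have cV: "xs 0 \<in> Xf \<longrightarrow> cost 0 \<le> Vf (xs 0)"
  proof
    assume "xs 0 \<in> Xf"
    then obtain ws where ws: "ocp_admissible F X U Xf N (xs 0) ws" "ocp_cost F L Vf N (xs 0) ws \<le> Vf (xs 0)"
      using TN by blast
    have "cost 0 \<le> ocp_cost F L Vf N (xs 0) ws" using V[of 0] ws(1) by (simp add: cost_def ocp_optimal_def)
    thus "cost 0 \<le> Vf (xs 0)" using ws(2) by simp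
  qed
  show ?thesis using feas inXU bound cV by blast
qed



lemma fpi_0[simp]: "fpi fp 0 xp u = xp" by (simp add: fpi_def)
lemma fpi_Suc[simp]: "fpi fp (Suc i) xp u = fp (fpi fp i xp u) u" by (simp add: fpi_def)

lemma traj_term:
  fixes fp :: "real^'n \<Rightarrow> real^'m \<Rightarrow> real^'n"
  assumes "\<beta> \<le> b" "g \<ge> 0"
  shows "traj (sys_f fp g c b) (xp, us, \<beta>) (\<lambda>i. if i = 0 then (kpx, 0, 1) else (kpx, 0, 0)) i
    = (fpi fp i xp kpx, if i = 0 then us else kpx, min (\<beta> + int (i - 1) * g) b)"
proof (induction i)
  case 0 then show ?case using assms by simp
next
  case (Suc i)
  show ?case
  proof (cases "i = 0")
    case True then show ?thesis using assms by (simp add: sys_f_def applied_input_def)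
  next
    case False
    then obtain k where k: "i = Suc k" by (cases i) auto
    let ?ws = "\<lambda>i. if i = 0 then (kpx, 0::int, 1::int) else (kpx, 0, 0)"
    have "traj (sys_f fp g c b) (xp, us, \<beta>) ?ws (Suc i) = sys_f fp g c b (traj (sys_f fp g c b) (xp, us, \<beta>) ?ws i) (?ws i)"
      by simp
    also have "\<dots> = sys_f fp g c b (fpi fp i xp kpx, kpx, min (\<beta> + int k * g) b) (kpx, 0, 0)"
      using Suc.IH False k by simp
    also have "\<dots> = (fp (fpi fp i xp kpx) kpx, kpx, min (min (\<beta> + int k * g) b + g) b)"
      by (simp add: sys_f_def applied_input_def)
    also have "min (min (\<beta> + int k * g) b + g) b = min (\<beta> + int (Suc i - 1) * g) b"
      using assms k by (simp add: min_def algebra_simps)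
    finally show ?thesis by simp
  qed
qed

lemma cost_term:
  fixes fp :: "real^'n \<Rightarrow> real^'m \<Rightarrow> real^'n"
  assumes "\<beta> \<le> b" "g \<ge> 0"
  shows "stage_cost Q R \<psi> b (traj (sys_f fp g c b) (xp, us, \<beta>) (\<lambda>i. if i = 0 then (kpx, 0, 1) else (kpx, 0, 0)) i)
      ((\<lambda>i. if i = 0 then (kpx, 0, 1) else (kpx, 0, 0)) i)
    = qf Q (fpi fp i xp kpx) + qf R kpx + \<psi> * (of_int b ^ 2 - of_int (min (\<beta> + int (i - 1) * g) b) ^ 2)"
  unfolding traj_term[OF assms] by (simp add: stage_cost_def)

lemma term_block:
  fixes fp :: "real^'n \<Rightarrow> real^'m \<Rightarrow> real^'n"
  assumes sub: "Xfp \<subseteq> Xp" and kp: "kp \<in> Xfp \<rightarrow> Up"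
    and A1: "\<forall>xp\<in>Xfp. (\<forall>i\<in>{1..q-1}. fpi fp i xp (kp xp) \<in> Xp) \<and> fpi fp q xp (kp xp) \<in> Xfp"
    and A2: "\<forall>xp\<in>Xfp. Vfp (fpi fp q xp (kp xp)) - Vfp xp
          \<le> - real q * qf R (kp xp) - (\<Sum>i<q. qf Q (fpi fp i xp (kp xp)))"
    and gb: "g \<ge> 1" "0 \<le> b" "q \<ge> 2" "int (q - 1) * g \<le> b"
    and ps: "\<psi> > 0" "\<sigma> > 0"
    "\<sigma> \<ge> \<psi> * (real q * of_int b ^ 2 - of_int g ^ 2 * (real q - 1) * (real q - 2) * (2 * real q - 3) / 6)"
  shows "\<forall>x\<in>state_set Xfp Up b. \<exists>ws. ocp_admissible (sys_f fp g c b) (state_set Xp Up b) (input_set Up)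
      (state_set Xfp Up b) q x ws \<and>
      ocp_cost (sys_f fp g c b) (stage_cost Q R \<psi> b) (term_cost Vfp \<sigma> b) q x ws \<le> term_cost Vfp \<sigma> b x"
proof
  fix x assume x: "x \<in> state_set Xfp Up b"
  obtain xp us \<beta> where xe: "x = (xp, us, \<beta>)" by (cases x) auto
  have xs: "xp \<in> Xfp" "us \<in> Up" "0 \<le> \<beta>" "\<beta> \<le> b" using x xe by (auto simp: state_set_def)
  define ws :: "nat \<Rightarrow> 'm ninput" where "ws = (\<lambda>i. if i = 0 then (kp xp, 0, 1) else (kp xp, 0, 0))"
  have g0: "g \<ge> 0" using gb by simp
  have kpU: "kp xp \<in> Up" using kp xs by auto
  have tr: "traj (sys_f fp g c b) x ws i = (fpi fp i xp (kp xp), if i = 0 then us else kp xp, min (\<beta> + int (i - 1) * g) b)" for i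
    unfolding xe ws_def by (rule traj_term[OF xs(4) g0])
  have bnd: "0 \<le> min (\<beta> + int (i - 1) * g) b \<and> min (\<beta> + int (i - 1) * g) b \<le> b" for i
    using xs gb by (simp add: min_def)
  have adm: "ocp_admissible (sys_f fp g c b) (state_set Xp Up b) (input_set Up) (state_set Xfp Up b) q x ws"
    unfolding ocp_admissible_def
  proof (intro conjI allI impI)
    fix i assume i: "i < q"
    have "fpi fp i xp (kp xp) \<in> Xp"
    proof (cases "i = 0")
      case True then show ?thesis using xs sub by auto
    next
      case False then show ?thesis using A1 xs i by auto
    qed
    thus "traj (sys_f fp g c b) x ws i \<in> state_set Xp Up b"
      unfolding tr state_set_def using bnd[of i] xs kpU by auto
    show "ws i \<in> input_set Up" using kpU by (simp add: ws_def input_set_def)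
  next
    show "traj (sys_f fp g c b) x ws q \<in> state_set Xfp Up b"
      unfolding tr state_set_def using bnd[of q] xs kpU A1 gb by auto
  qed
  have cst: "stage_cost Q R \<psi> b (traj (sys_f fp g c b) x ws i) (ws i)
    = qf Q (fpi fp i xp (kp xp)) + qf R (kp xp) + \<psi> * (of_int b ^ 2 - of_int (min (\<beta> + int (i - 1) * g) b) ^ 2)" for i
    unfolding xe ws_def by (rule cost_term[OF xs(4) g0])
  have tok: "\<psi> * (\<Sum>i<q. of_int b ^ 2 - of_int (min (\<beta> + int (i - 1) * g) b) ^ 2)
      \<le> \<sigma> * (of_int (min (\<beta> + int (q - 1) * g) b) ^ 2 - of_int \<beta> ^ 2)"
    by (rule token) (use xs gb ps in auto)
  have dec: "Vfp (fpi fp q xp (kp xp)) - Vfp xp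
          \<le> - real q * qf R (kp xp) - (\<Sum>i<q. qf Q (fpi fp i xp (kp xp)))" using A2 xs by blast
  have "ocp_cost (sys_f fp g c b) (stage_cost Q R \<psi> b) (term_cost Vfp \<sigma> b) q x ws
     = (\<Sum>i<q. qf Q (fpi fp i xp (kp xp))) + real q * qf R (kp xp)
       + \<psi> * (\<Sum>i<q. of_int b ^ 2 - of_int (min (\<beta> + int (i - 1) * g) b) ^ 2)
       + (Vfp (fpi fp q xp (kp xp)) + \<sigma> * (of_int b ^ 2 - of_int (min (\<beta> + int (q - 1) * g) b) ^ 2))"
    unfolding ocp_cost_def cst by (simp add: sum.distrib sum_distrib_left tr term_cost_def)
  also have "\<dots> \<le> term_cost Vfp \<sigma> b x"
    using tok dec by (simp add: xe term_cost_def algebra_simps)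
  finally show "\<exists>ws. ocp_admissible (sys_f fp g c b) (state_set Xp Up b) (input_set Up)
      (state_set Xfp Up b) q x ws \<and>
      ocp_cost (sys_f fp g c b) (stage_cost Q R \<psi> b) (term_cost Vfp \<sigma> b) q x ws \<le> term_cost Vfp \<sigma> b x"
    using adm by blast
qed



lemma L_eq:
  assumes "u \<in> input_set Up"
  shows "stage_cost Q R \<psi> b x u = qf Q (fst x) + qf R (applied_input x u) + \<psi> * (of_int b ^ 2 - of_int (snd (snd x)) ^ 2)"
proof -
  obtain xp us \<beta> where xe: "x = (xp, us, \<beta>)" by (cases x) auto
  obtain uc \<gamma> \<delta> where ue: "u = (uc, \<gamma>, \<delta>)" by (cases u) auto
  have "(\<gamma>, \<delta>) = (0, 0) \<or> (\<gamma>, \<delta>) = (1, 0) \<or> (\<gamma>, \<delta>) = (0, 1)" using assms ue by (auto simp: input_set_def)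
  thus ?thesis by (auto simp: xe ue stage_cost_def applied_input_def)
qed

lemma F_us: "fst (snd (sys_f fp g c b x u)) = applied_input x u"
  by (cases x; cases u) (simp add: sys_f_def)

lemma qf_nonneg: "pos_def_mat A \<Longrightarrow> 0 \<le> qf A v"
proof -
  assume "pos_def_mat A"
  then obtain l where "l > 0" "\<forall>v. l * norm v ^ 2 \<le> qf A v" using qf_lower by blast
  hence "l * norm v ^ 2 \<le> qf A v" "0 \<le> l * norm v ^ 2" by auto
  thus ?thesis by linarith
qed

lemma sq_le: "0 \<le> \<beta> \<Longrightarrow> \<beta> \<le> b \<Longrightarrow> (of_int \<beta> :: real) ^ 2 \<le> of_int b ^ 2"
  by (rule power_mono) auto

lemma L_nonneg:
  assumes "pos_def_mat Q" "pos_def_mat R" "\<psi> > 0" "x \<in> state_set Xp Up b" "u \<in> input_set Up"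
  shows "0 \<le> stage_cost Q R \<psi> b x u"
proof -
  have "0 \<le> snd (snd x)" "snd (snd x) \<le> b" using assms(4) by (auto simp: state_set_def)
  hence "0 \<le> \<psi> * (of_int b ^ 2 - of_int (snd (snd x)) ^ 2)" using sq_le assms(3) by simp
  thus ?thesis unfolding L_eq[OF assms(5)] using qf_nonneg[OF assms(1)] qf_nonneg[OF assms(2)]
    by (simp add: add_nonneg_nonneg)
qed

lemma V_nonneg:
  assumes "\<sigma> > 0" "Vfp 0 = 0" "\<forall>xp\<in>Xfp. xp \<noteq> 0 \<longrightarrow> Vfp xp > 0" "x \<in> state_set Xfp Up b"
  shows "0 \<le> term_cost Vfp \<sigma> b x"
proof -
  obtain xp us \<beta> where xe: "x = (xp, us, \<beta>)" by (cases x) auto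
  have h: "xp \<in> Xfp" "0 \<le> \<beta>" "\<beta> \<le> b" using assms(4) xe by (auto simp: state_set_def)
  have "0 \<le> Vfp xp" using assms(2,3) h(1) by (cases "xp = 0") (auto intro: less_imp_le)
  moreover have "0 \<le> \<sigma> * (of_int b ^ 2 - of_int \<beta> ^ 2)" using sq_le[OF h(2,3)] assms(1) by simp
  ultimately show ?thesis by (simp add: xe term_cost_def)
qed

lemma small:
  assumes "pos_def_mat Q" "pos_def_mat R" "\<psi> > 0" "\<epsilon> > 0"
  shows "\<exists>\<eta>>0. \<forall>x\<in>state_set Xp Up b. \<forall>u\<in>input_set Up. stage_cost Q R \<psi> b x u < \<eta> \<longrightarrow>
     norm (fst x) < \<epsilon> / 3 \<and> norm (applied_input x u) < \<epsilon> / 3 \<and> snd (snd x) = b"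
proof -
  obtain lQ where lQ: "lQ > 0" "\<forall>v. lQ * norm v ^ 2 \<le> qf Q v" using qf_lower[OF assms(1)] by blast
  obtain lR where lR: "lR > 0" "\<forall>v. lR * norm v ^ 2 \<le> qf R v" using qf_lower[OF assms(2)] by blast
  define \<eta> where "\<eta> = min (lQ * (\<epsilon> / 3) ^ 2) (min (lR * (\<epsilon> / 3) ^ 2) \<psi>)"
  have \<eta>: "\<eta> > 0" using lQ lR assms by (simp add: \<eta>_def)
  have e1: "\<eta> \<le> lQ * (\<epsilon> / 3) ^ 2" and e2: "\<eta> \<le> lR * (\<epsilon> / 3) ^ 2" and e3: "\<eta> \<le> \<psi>"
    by (simp_all add: \<eta>_def)
  show ?thesis
  proof (intro exI[of _ \<eta>] conjI ballI impI \<eta>)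
    fix x u assume x: "x \<in> state_set Xp Up b" and u: "u \<in> input_set Up" and Lx: "stage_cost Q R \<psi> b x u < \<eta>"
    have b: "0 \<le> snd (snd x)" "snd (snd x) \<le> b" using x by (auto simp: state_set_def)
    have t3: "0 \<le> \<psi> * (of_int b ^ 2 - of_int (snd (snd x)) ^ 2)" using sq_le[OF b] assms(3) by simp
    have t1: "0 \<le> qf Q (fst x)" and t2: "0 \<le> qf R (applied_input x u)"
      using qf_nonneg[OF assms(1)] qf_nonneg[OF assms(2)] by auto
    have Le: "stage_cost Q R \<psi> b x u = qf Q (fst x) + qf R (applied_input x u) + \<psi> * (of_int b ^ 2 - of_int (snd (snd x)) ^ 2)"
      by (rule L_eq[OF u])
    have "lQ * norm (fst x) ^ 2 < lQ * (\<epsilon> / 3) ^ 2"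
      using lQ(2)[rule_format, of "fst x"] Lx Le t2 t3 e1 by linarith
    hence "norm (fst x) ^ 2 < (\<epsilon> / 3) ^ 2" using lQ(1) by simp
    thus "norm (fst x) < \<epsilon> / 3" using assms(4) power_less_imp_less_base by fastforce
    have "lR * norm (applied_input x u) ^ 2 < lR * (\<epsilon> / 3) ^ 2"
      using lR(2)[rule_format, of "applied_input x u"] Lx Le t1 t3 e2 by linarith
    hence "norm (applied_input x u) ^ 2 < (\<epsilon> / 3) ^ 2" using lR(1) by simp
    thus "norm (applied_input x u) < \<epsilon> / 3" using assms(4) power_less_imp_less_base by fastforce
    have "\<psi> * (of_int b ^ 2 - of_int (snd (snd x)) ^ 2) < \<psi> * 1"
      using Lx Le t1 t2 e3 by linarith
    hence lt1: "of_int b ^ 2 - of_int (snd (snd x)) ^ 2 < (1::real)" using assms(3) by simp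
    show "snd (snd x) = b"
    proof (rule ccontr)
      assume "snd (snd x) \<noteq> b"
      hence "snd (snd x) + 1 \<le> b" using b by simp
      hence "(of_int (snd (snd x)) + 1 :: real) ^ 2 \<le> of_int b ^ 2"
        using b by (intro power_mono) (simp_all add: of_int_add[symmetric] del: of_int_add)
      moreover have "(of_int (snd (snd x)) + 1 :: real) ^ 2 = of_int (snd (snd x)) ^ 2 + 2 * of_int (snd (snd x)) + 1"
        by (simp add: power2_eq_square algebra_simps)
      ultimately show False using lt1 b by simp
    qed
  qed
qed

lemma key_ex:
  assumes "pos_def_mat Q" "pos_def_mat R" "\<psi> > 0" "\<epsilon> > 0"
  shows "\<exists>\<eta>>0. \<forall>x u x' u'. x \<in> state_set Xp Up b \<longrightarrow> u \<in> input_set Up \<longrightarrow>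
     x' \<in> state_set Xp Up b \<longrightarrow> u' \<in> input_set Up \<longrightarrow>
     stage_cost Q R \<psi> b x u < \<eta> \<longrightarrow> stage_cost Q R \<psi> b x' u' < \<eta> \<longrightarrow>
     fst (snd x') = applied_input x u \<longrightarrow> dist_eq b x' < \<epsilon>"
proof -
  obtain \<eta> where \<eta>: "\<eta> > 0" "\<forall>x\<in>state_set Xp Up b. \<forall>u\<in>input_set Up. stage_cost Q R \<psi> b x u < \<eta> \<longrightarrow>
     norm (fst x) < \<epsilon> / 3 \<and> norm (applied_input x u) < \<epsilon> / 3 \<and> snd (snd x) = b"
    using small[OF assms] by blast
  show ?thesis
  proof (intro exI[of _ \<eta>] conjI allI impI \<eta>(1))
    fix x u x' u' assume h: "x \<in> state_set Xp Up b" "u \<in> input_set Up"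
      "x' \<in> state_set Xp Up b" "u' \<in> input_set Up" "stage_cost Q R \<psi> b x u < \<eta>"
      "stage_cost Q R \<psi> b x' u' < \<eta>" "fst (snd x') = applied_input x u"
    have a: "norm (applied_input x u) < \<epsilon> / 3" using \<eta>(2) h by blast
    have c: "norm (fst x') < \<epsilon> / 3" "snd (snd x') = b" using \<eta>(2) h by blast+
    obtain xp us \<beta> where xe: "x' = (xp, us, \<beta>)" by (cases x') auto
    have "dist_eq b x' = norm xp + norm us" using c(2) by (simp add: xe dist_eq_def)
    moreover have "us = applied_input x u" using h(7) by (simp add: xe)
    ultimately show "dist_eq b x' < \<epsilon>" using a c(1) assms(4) by (simp add: xe)
  qed
qed



theorem theorem3:
  fixes fp :: "real^'n \<Rightarrow> real^'m \<Rightarrow> real^'n"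
    and Xp :: "(real^'n) set" and Up :: "(real^'m) set"
    and Q :: "real^'n^'n" and R :: "real^'m^'m"
    and g c b :: int and \<psi> \<sigma> :: real
    and Xfp :: "(real^'n) set" and kp :: "real^'n \<Rightarrow> real^'m" and Vfp :: "real^'n \<Rightarrow> real"
    and r J :: nat
  defines "q \<equiv> nat \<lceil>real_of_int c / real_of_int g\<rceil>"
  defines "M \<equiv> r * q"
  defines "N \<equiv> J * M"
  defines "F \<equiv> sys_f fp g c b"
  defines "X \<equiv> state_set Xp Up b"
  defines "U \<equiv> input_set Up"
  defines "Xf \<equiv> state_set Xfp Up b"
  defines "L \<equiv> stage_cost Q R \<psi> b"
  defines "Vf \<equiv> term_cost Vfp \<sigma> b"
  assumes fp0: "fp 0 0 = 0"
    and Xp: "closed Xp" "0 \<in> Xp"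
    and Up: "compact Up" "0 \<in> Up"
    and QR: "pos_def_mat Q" "pos_def_mat R"
    and gcb: "g \<ge> 1" "c \<ge> g" "b \<ge> c"
    and q2: "q \<ge> 2"
    and psi: "\<psi> > 0"
    and A1: "closed Xfp" "Xfp \<subseteq> Xp" "0 \<in> Xfp" "kp \<in> Xfp \<rightarrow> Up"
      "\<forall>xp\<in>Xfp. (\<forall>i\<in>{1..q-1}. fpi fp i xp (kp xp) \<in> Xp) \<and> fpi fp q xp (kp xp) \<in> Xfp"
      "(0, 0) \<in> interior (Xfp \<times> Up)"
    and A2: "continuous_on Xfp Vfp" "Vfp 0 = 0" "\<forall>xp\<in>Xfp. xp \<noteq> 0 \<longrightarrow> Vfp xp > 0"
      "\<forall>xp\<in>Xfp. Vfp (fpi fp q xp (kp xp)) - Vfp xp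
          \<le> - real q * qf R (kp xp) - (\<Sum>i<q. qf Q (fpi fp i xp (kp xp)))"
    and A4: "\<sigma> > 0"
      "\<sigma> \<ge> \<psi> * (real q * of_int b ^ 2
              - of_int g ^ 2 * (real q - 1) * (real q - 2) * (2 * real q - 3) / 6)"
    and r: "r \<ge> 1" and J: "J \<ge> 1"
    and opt_exists: "\<forall>x0. ocp_feasible F X U Xf N x0 \<longrightarrow> (\<exists>us. ocp_optimal F X U Xf L Vf N x0 us)"
  shows "(\<forall>xs us. rollout_closed_loop F X U Xf L Vf N M xs us \<and> ocp_feasible F X U Xf N (xs 0)
            \<longrightarrow> (\<forall>j. ocp_feasible F X U Xf N (xs (j * M))))
       \<and> asympt_stable_cl (rollout_closed_loop F X U Xf L Vf N M)
            {x. ocp_feasible F X U Xf N x} (dist_eq b)"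
proof -
  have g1: "g \<ge> 1" and cg: "c \<ge> g" and bc: "b \<ge> c" using gcb by auto
  have b0: "0 \<le> b" using gcb by simp
  have qpos: "real_of_int c / real_of_int g > 0" using gcb by simp
  have ceq: "int q = \<lceil>real_of_int c / real_of_int g\<rceil>"
  proof -
    have "\<lceil>real_of_int c / real_of_int g\<rceil> \<ge> 0" using qpos by simp
    thus ?thesis by (simp add: q_def)
  qed
  have "real_of_int (int q) - 1 < real_of_int c / real_of_int g"
    unfolding ceq using ceiling_correct by blast
  hence "(real_of_int (int q) - 1) * real_of_int g < real_of_int c"
    using g1 by (simp add: field_simps)
  hence "(int q - 1) * g < c" by (metis of_int_1 of_int_diff of_int_less_iff of_int_mult)
  hence qgb: "int (q - 1) * g \<le> b" using q2 bc by (simp add: of_nat_diff)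
  have TB: "\<forall>x\<in>Xf. \<exists>ws. ocp_admissible F X U Xf q x ws \<and> ocp_cost F L Vf q x ws \<le> Vf x"
    unfolding F_def X_def U_def Xf_def L_def Vf_def
    by (rule term_block[OF A1(2) A1(4) A1(5) A2(4) g1 b0 q2 qgb psi A4(1) A4(2)])
  have TM: "\<forall>x\<in>Xf. \<exists>ws. ocp_admissible F X U Xf M x ws \<and> ocp_cost F L Vf M x ws \<le> Vf x"
    using term_blocks[OF TB, of _ r] by (simp add: M_def)
  have TN: "\<forall>x\<in>Xf. \<exists>ws. ocp_admissible F X U Xf N x ws \<and> ocp_cost F L Vf N x ws \<le> Vf x"
    using term_blocks[OF TB, of _ "J * r"] by (simp add: N_def M_def mult.assoc)
  have M1: "1 \<le> M" using r q2 by (simp add: M_def)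
  have MN: "M \<le> N" using J by (simp add: N_def)
  have Lnn: "\<forall>x\<in>X. \<forall>u\<in>U. 0 \<le> L x u"
    unfolding X_def U_def L_def using L_nonneg[OF QR psi] by blast
  have Vnn: "\<forall>x\<in>Xf. 0 \<le> Vf x"
    unfolding Xf_def Vf_def using V_nonneg[OF A4(1) A2(2) A2(3)] by blast
  note gen = closed_loop_generic[OF TM TN M1 MN Lnn Vnn]
  have Fus: "fst (snd (F x u)) = applied_input x u" for x u unfolding F_def by (rule F_us)
  have key: "\<exists>\<eta>>0. \<forall>x u x' u'. x \<in> X \<longrightarrow> u \<in> U \<longrightarrow> x' \<in> X \<longrightarrow> u' \<in> U \<longrightarrow>
     L x u < \<eta> \<longrightarrow> L x' u' < \<eta> \<longrightarrow> fst (snd x') = applied_input x u \<longrightarrow> dist_eq b x' < \<epsilon>"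
    if "\<epsilon> > 0" for \<epsilon>
    unfolding X_def U_def L_def by (rule key_ex[OF QR psi that])
  have Lle: "L (xs k) (us k) \<le> C" if "\<forall>k. xs k \<in> X \<and> us k \<in> U" "\<forall>n. (\<Sum>k<n. L (xs k) (us k)) \<le> C" for xs us C and k :: nat
  proof -
    have "0 \<le> (\<Sum>i<k. L (xs i) (us i))" using that(1) Lnn by (intro sum_nonneg) blast
    moreover have "(\<Sum>i<Suc k. L (xs i) (us i)) \<le> C" using that(2) by blast
    ultimately show ?thesis by simp
  qed
  have dyn: "xs (Suc k) = F (xs k) (us k)" if "rollout_closed_loop F X U Xf L Vf N M xs us" for xs us k
    using that by (simp add: rollout_closed_loop_def)
  show ?thesis
  proof (intro conjI allI impI)
    fix xs us j assume "rollout_closed_loop F X U Xf L Vf N M xs us \<and> ocp_feasible F X U Xf N (xs 0)"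
    thus "ocp_feasible F X U Xf N (xs (j * M))" using gen by blast
  next
    show "asympt_stable_cl (rollout_closed_loop F X U Xf L Vf N M) {x. ocp_feasible F X U Xf N x} (dist_eq b)"
      unfolding asympt_stable_cl_def
    proof (intro conjI allI impI)
      fix \<epsilon> :: real assume ep: "\<epsilon> > 0"
      obtain \<eta> where \<eta>: "\<eta> > 0" "\<forall>x u x' u'. x \<in> X \<longrightarrow> u \<in> U \<longrightarrow> x' \<in> X \<longrightarrow> u' \<in> U \<longrightarrow>
         L x u < \<eta> \<longrightarrow> L x' u' < \<eta> \<longrightarrow> fst (snd x') = applied_input x u \<longrightarrow> dist_eq b x' < \<epsilon>"
        using key[OF ep] by blast
      obtain d1 where d1: "d1 > 0" "\<forall>x'\<in>Xfp. dist x' 0 < d1 \<longrightarrow> dist (Vfp x') (Vfp 0) < \<eta>"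
        using A2(1) A1(3) \<eta>(1) unfolding continuous_on_iff by blast
      obtain d2 where d2: "d2 > 0" "ball (0, 0) d2 \<subseteq> Xfp \<times> Up"
        using A1(6) unfolding mem_interior by blast
      define \<delta> where "\<delta> = min (min d1 d2) (min 1 \<epsilon>)"
      have \<delta>: "\<delta> > 0" using d1 d2 ep by (simp add: \<delta>_def)
      show "\<exists>\<delta>>0. \<forall>xs us. rollout_closed_loop F X U Xf L Vf N M xs us \<and> xs 0 \<in> {x. ocp_feasible F X U Xf N x}
          \<and> dist_eq b (xs 0) < \<delta> \<longrightarrow> (\<forall>k. dist_eq b (xs k) < \<epsilon>)"
      proof (intro exI[of _ \<delta>] conjI allI impI \<delta>)
        fix xs us k
        assume h: "rollout_closed_loop F X U Xf L Vf N M xs us \<and> xs 0 \<in> {x. ocp_feasible F X U Xf N x}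
          \<and> dist_eq b (xs 0) < \<delta>"
        have cl: "rollout_closed_loop F X U Xf L Vf N M xs us" and f0: "ocp_feasible F X U Xf N (xs 0)"
          and d0: "dist_eq b (xs 0) < \<delta>" using h by auto
        have XU: "\<forall>k. xs k \<in> X \<and> us k \<in> U" using gen[OF cl f0] by blast
        obtain C where C: "\<forall>n. (\<Sum>k<n. L (xs k) (us k)) \<le> C" "xs 0 \<in> Xf \<longrightarrow> C \<le> Vf (xs 0)"
          using gen[OF cl f0] by blast
        obtain xp0 us0 \<beta>0 where x0: "xs 0 = (xp0, us0, \<beta>0)" by (cases "xs 0") auto
        have nd: "norm xp0 + norm us0 + \<bar>real_of_int (\<beta>0 - b)\<bar> < \<delta>" using d0 by (simp add: x0 dist_eq_def)
        have "\<bar>real_of_int (\<beta>0 - b)\<bar> < 1" using nd \<delta>_def by (smt (verit) norm_ge_zero)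
        hence \<beta>0: "\<beta>0 = b" by (metis abs_zero add.inverse_neutral eq_iff_diff_eq_0 of_int_0 of_int_abs of_int_less_1_iff zabs_less_one_iff)
        have nx: "norm xp0 < d2" "norm xp0 < d1" using nd \<delta>_def by (smt (verit) norm_ge_zero abs_ge_zero)+
        have "dist (0, 0) (xp0, 0::real^'m) = norm xp0" by (simp add: dist_Pair_Pair dist_norm)
        hence "(xp0, 0::real^'m) \<in> ball (0, 0) d2" using nx by simp
        hence xf: "xp0 \<in> Xfp" using d2(2) by blast
        have "us0 \<in> Up" using XU x0 by (metis X_def state_set_def mem_Times_iff fst_conv snd_conv)
        moreover have "0 \<le> \<beta>0" "\<beta>0 \<le> b" using \<beta>0 b0 by auto
        ultimately have x0f: "xs 0 \<in> Xf" using xf by (simp add: x0 Xf_def state_set_def)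
        have "Vf (xs 0) = Vfp xp0" by (simp add: x0 \<beta>0 Vf_def term_cost_def)
        also have "\<dots> < \<eta>"
        proof -
          have "\<bar>Vfp xp0\<bar> < \<eta>" using d1(2) xf nx A2(2) by (simp add: dist_norm)
          thus ?thesis by simp
        qed
        finally have Cl: "C < \<eta>" using C(2) x0f by simp
        have small: "L (xs k) (us k) < \<eta>" for k using Lle[OF XU C(1), of k] Cl by simp
        show "dist_eq b (xs k) < \<epsilon>"
        proof (cases k)
          case 0 then show ?thesis using d0 \<delta>_def by simp
        next
          case (Suc k')
          have "fst (snd (xs (Suc k'))) = applied_input (xs k') (us k')" using dyn[OF cl] Fus by simp
          then show ?thesis using \<eta>(2) XU small Suc by blast
        qed
      qed
    next
      fix xs us
      assume h: "rollout_closed_loop F X U Xf L Vf N M xs us \<and> xs 0 \<in> {x. ocp_feasible F X U Xf N x}"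
      have cl: "rollout_closed_loop F X U Xf L Vf N M xs us" and f0: "ocp_feasible F X U Xf N (xs 0)"
        using h by auto
      have XU: "\<forall>k. xs k \<in> X \<and> us k \<in> U" using gen[OF cl f0] by blast
      obtain C where C: "\<forall>n. (\<Sum>k<n. L (xs k) (us k)) \<le> C"
        using gen[OF cl f0] by blast
      have "summable (\<lambda>k. L (xs k) (us k))"
        by (rule summableI_nonneg_bounded[where x = C]) (use XU Lnn C in auto)
      hence Lz: "(\<lambda>k. L (xs k) (us k)) \<longlonglongrightarrow> 0" by (rule summable_LIMSEQ_zero)
      show "(\<lambda>k. dist_eq b (xs k)) \<longlonglongrightarrow> 0"
        unfolding LIMSEQ_iff
      proof (intro allI impI)
        fix \<epsilon> :: real assume ep: "\<epsilon> > 0"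
        obtain \<eta> where \<eta>: "\<eta> > 0" "\<forall>x u x' u'. x \<in> X \<longrightarrow> u \<in> U \<longrightarrow> x' \<in> X \<longrightarrow> u' \<in> U \<longrightarrow>
           L x u < \<eta> \<longrightarrow> L x' u' < \<eta> \<longrightarrow> fst (snd x') = applied_input x u \<longrightarrow> dist_eq b x' < \<epsilon>"
          using key[OF ep] by blast
        obtain N0 where N0: "\<forall>n\<ge>N0. norm (L (xs n) (us n) - 0) < \<eta>"
          using Lz \<eta>(1) unfolding LIMSEQ_iff by blast
        show "\<exists>no. \<forall>n\<ge>no. norm (dist_eq b (xs n) - 0) < \<epsilon>"
        proof (intro exI[of _ "Suc N0"] allI impI)
          fix n assume n: "Suc N0 \<le> n"
          then obtain k' where k': "n = Suc k'" "k' \<ge> N0" by (cases n) auto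
          have s1: "L (xs k') (us k') < \<eta>" "L (xs n) (us n) < \<eta>"
            using N0[rule_format, of k'] N0[rule_format, of n] k' n by auto
          have "fst (snd (xs (Suc k'))) = applied_input (xs k') (us k')" using dyn[OF cl] Fus by simp
          hence dl: "dist_eq b (xs n) < \<epsilon>" using \<eta>(2) XU s1 k' by blast
          have "0 \<le> dist_eq b (xs n)" by (cases "xs n") (simp add: dist_eq_def)
          thus "norm (dist_eq b (xs n) - 0) < \<epsilon>" using dl by simp
        qed
      qed
    qed
  qed
qed


end
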